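(* Let $\sigma>0$. Let $P_a$ and $P_b$ be the probability distributions on $(0,\infty)$ with densities $$p_a(y)=\sigma^2\, y^{-1-2\sigma^2}\exp\!\left(-\frac{1}{2y^{2\sigma^2}}\right),\qquad p_b(y)=\sqrt{\frac{2}{\pi}}\,\sigma^2\, y^{-1-\sigma^2}\exp\!\left(-\frac{1}{2y^{2\sigma^2}}\right),\qquad y>0.$$ If $a\sim P_a$ and $b\sim P_b$ are independent, then $a\cdot b\sim\mathcal{F}_{\sigma^2}$.
   Context: $\mathcal{F}_{\sigma^2}$ denotes the distribution of $\exp(\tau/\sigma^2)$, where $\tau$ is a standard Gumbel random variable (CDF $P(\tau\le t)=\exp(-e^{-t})$); equivalently, $\mathcal{F}_{\sigma^2}$ is the Fréchet distribution with scale parameter $1$ and shape parameter $\sigma^2$, i.e. with CDF $\exp(-y^{-\sigma^2})$ for $y>0$. *)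

theory Defs
  imports "HOL-Probability.Probability"
begin

definition gumbel_density :: "real \<Rightarrow> real" where
  "gumbel_density t = exp (- t) * exp (- exp (- t))"

definition gumbel_measure :: "real measure" where
  "gumbel_measure = density lborel (\<lambda>t. ennreal (gumbel_density t))"

definition frechet_measure :: "real \<Rightarrow> real measure" where
  "frechet_measure s2 = distr gumbel_measure borel (\<lambda>t. exp (t / s2))"

definition p_a :: "real \<Rightarrow> real \<Rightarrow> real" where
  "p_a \<sigma> y = (if y > 0 then
      \<sigma>\<^sup>2 * y powr (-1 - 2 * \<sigma>\<^sup>2) * exp (- 1 / (2 * y powr (2 * \<sigma>\<^sup>2))) else 0)"

definition p_b :: "real \<Rightarrow> real \<Rightarrow> real" where
  "p_b \<sigma> y = (if y > 0 then
      sqrt (2 / pi) * \<sigma>\<^sup>2 * y powr (-1 - \<sigma>\<^sup>2) * exp (- 1 / (2 * y powr (2 * \<sigma>\<^sup>2))) else 0)"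

end

theory Submission
  imports Defs "HOL-Analysis.Analysis" "HOL-Real_Asymp.Real_Asymp"
begin


lemma gauss_hk: "((\<lambda>u::real. exp (- u\<^sup>2 / 2)) has_integral sqrt (2*pi)) UNIV"
proof -
  have "(std_normal_density has_integral 1) UNIV"
    using has_integral_integral_lborel[OF integrable_normal_density[of 1 0]]
      integral_normal_density[of 1 0] by simp
  from has_integral_mult_right[OF this, of "sqrt (2*pi)"]
  show ?thesis by (simp add: std_normal_density_def)
qed

lemma powr2: "(y::real) powr (2 * s) = y powr s * y powr s" by (metis mult_2 powr_add)

lemma powr_facts:
  fixes y x s :: real assumes y: "y > 0" and x: "x > 0"
  shows "y powr (-s) = 1 / y powr s"
    "(y/x) powr s = y powr s / x powr s"
    "y powr (-1-s) = 1/(y * y powr s)"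
    "y powr (s-1) = y powr s / y"
    "y powr (- 2 * s) = 1/(y powr s)\<^sup>2"
    "y powr (2 * s) = (y powr s)\<^sup>2"
    "(y/x) powr (2 * s) = (y powr s)\<^sup>2/(x powr s)\<^sup>2"
  using y x
  subgoal using y x by (simp add: abs_of_pos powr_minus divide_inverse)
  subgoal using y x by (simp add: abs_of_pos powr_divide)
  subgoal proof -
    have "y powr (-1-s) = inverse (y powr (1+s))" by (simp add: powr_minus[symmetric])
    also have "\<dots> = 1/(y * y powr s)" using y by (simp add: powr_add divide_inverse)
    finally show ?thesis .
  qed
  subgoal using y x by (simp add: abs_of_pos powr_diff)
  subgoal proof -
    have "y powr (- 2 * s) = inverse (y powr (2 * s))" by (simp add: powr_minus[symmetric])
    also have "\<dots> = 1/(y powr s)\<^sup>2" using powr2[of y s] by (simp add: divide_inverse power2_eq_square)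
    finally show ?thesis .
  qed
  subgoal using powr2[of y s] by (simp add: power2_eq_square)
  subgoal using y x powr2[of y s] powr2[of x s] by (simp add: powr_divide power2_eq_square powr_mult_base)
  done
definition "Ek s x y = exp (- (1/(y powr s)\<^sup>2 + (y powr s)\<^sup>2/(x powr s)\<^sup>2)/2)"
definition "KK s x y = sqrt(2/pi) * s * (1/(y * y powr s)) * Ek s x y"
definition "KK2 s x y = sqrt(2/pi) * s * (1/x powr s) * (y powr s / y) * Ek s x y"
definition "gg s x y = y powr s / x powr s - 1 / y powr s"
definition "gg' s x y = s / y * (y powr s / x powr s + 1 / y powr s)"

lemma gg_deriv:
  fixes s x y :: real
  assumes "y > 0" "x > 0"
  shows "(gg s x has_real_derivative gg' s x y) (at y)"
proof -
  have "((\<lambda>y. y powr s / x powr s - 1 / y powr s) has_real_derivative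
     (s * y powr (s - 1)) / x powr s + (s * y powr (s - 1)) / (y powr s)\<^sup>2) (at y)"
    using assms by (auto intro!: derivative_eq_intros simp: power2_eq_square)
  moreover have "(s * y powr (s - 1)) / x powr s + (s * y powr (s - 1)) / (y powr s)\<^sup>2 = gg' s x y"
    using assms by (simp add: gg'_def powr_facts field_simps power2_eq_square)
  ultimately show ?thesis unfolding gg_def by simp
qed

lemma gg_surj:
  fixes s x :: real
  assumes "s > 0" "x > 0"
  shows "gg s x ` {0<..} = UNIV"
proof -
  have "u \<in> gg s x ` {0<..}" for u
  proof -
    define X where "X = x powr s"
    have X: "X > 0" using assms by (simp add: X_def)
    define R where "R = sqrt (u\<^sup>2 * X\<^sup>2 + 4 * X)"
    have R2: "R\<^sup>2 = u\<^sup>2 * X\<^sup>2 + 4 * X" unfolding R_def using X by simp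
    have "- (u * X) < R" unfolding R_def using X
      by (intro real_less_rsqrt) (simp add: power2_eq_square power_mult_distrib)
    define v where "v = (u * X + R) / 2"
    have v: "v > 0" unfolding v_def using \<open>- (u * X) < R\<close> by simp
    have vv: "v\<^sup>2 = u * X * v + X" unfolding v_def using R2
      by (simp add: power2_eq_square field_simps)
    define y where "y = v powr (1/s)"
    have y: "y > 0" using v by (simp add: y_def)
    have yp: "y powr s = v" using v assms by (simp add: y_def powr_powr)
    have "gg s x y = v / X - 1 / v" by (simp add: gg_def yp X_def)
    also have "\<dots> = u" using v X vv by (simp add: field_simps power2_eq_square)
    finally show ?thesis using y by force
  qed
  then show ?thesis by auto
qed

lemma gg_mono:
  fixes s x y1 y2 :: real
  assumes "s > 0" "x > 0" "0 < y1" "y1 < y2"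
  shows "gg s x y1 < gg s x y2"
proof -
  have a: "y1 powr s < y2 powr s" using assms by (simp add: powr_less_mono2)
  have "y1 powr s / x powr s < y2 powr s / x powr s" using a assms by (simp add: divide_strict_right_mono)
  moreover have "1 / y2 powr s < 1 / y1 powr s" using a assms by (simp add: frac_less2)
  ultimately show ?thesis unfolding gg_def by linarith
qed

lemma gg_inj: fixes s x :: real assumes "s > 0" "x > 0" shows "inj_on (gg s x) {0<..}"
proof (rule inj_onI)
  fix y1 y2 assume "y1 \<in> {0<..}" "y2 \<in> {0<..}" "gg s x y1 = gg s x y2"
  then show "y1 = y2" using gg_mono[OF assms, of y1 y2] gg_mono[OF assms, of y2 y1]
    by (cases y1 y2 rule: linorder_cases) auto
qed

lemma sum_identity:
  fixes s x y :: real
  assumes "s > 0" "x > 0" "y > 0"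
  shows "KK s x y + KK2 s x y = sqrt(2/pi) * exp (- (1 / x powr s)) * (\<bar>gg' s x y\<bar> * exp (- (gg s x y)\<^sup>2 / 2))"
proof -
  define P where "P = y powr s"
  define X where "X = x powr s"
  have P: "P > 0" and X: "X > 0" using assms by (auto simp: P_def X_def)
  have g': "gg' s x y > 0" using assms P X unfolding gg'_def P_def[symmetric] X_def[symmetric]
    by (intro mult_pos_pos add_pos_pos) auto
  have e: "- (gg s x y)\<^sup>2 / 2 = - (1/P\<^sup>2 + P\<^sup>2/X\<^sup>2)/2 + 1/X"
    unfolding gg_def P_def[symmetric] X_def[symmetric] using P X
    by (simp add: field_simps power2_eq_square)
  have "exp (- (1 / X)) * exp (- (gg s x y)\<^sup>2 / 2) = Ek s x y"
    unfolding e Ek_def P_def X_def by (simp add: exp_add[symmetric])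
  moreover have "KK s x y + KK2 s x y = sqrt(2/pi) * gg' s x y * Ek s x y"
    unfolding KK_def KK2_def gg'_def P_def[symmetric] X_def[symmetric] using P X assms
    by (simp add: field_simps)
  ultimately show ?thesis using g' unfolding X_def by (simp add: mult_ac)
qed

lemma mirror_identity:
  fixes s x y :: real
  assumes "s > 0" "x > 0" "y > 0"
  shows "\<bar>- x / y\<^sup>2\<bar> * KK s x (x / y) = KK2 s x y"
proof -
  define P where "P = y powr s"
  define X where "X = x powr s"
  have P: "P > 0" and X: "X > 0" using assms by (auto simp: P_def X_def)
  have xy: "(x/y) powr s = X / P" using assms by (simp add: powr_divide P_def X_def)
  have E: "Ek s x (x/y) = Ek s x y"
    unfolding Ek_def xy P_def[symmetric] X_def[symmetric] using P X
    by (simp add: field_simps power2_eq_square)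
  show ?thesis unfolding KK_def KK2_def E xy P_def[symmetric] X_def[symmetric] using assms P X
    by (simp add: field_simps power2_eq_square)
qed

lemma ai_has_integral:
  fixes f :: "real \<Rightarrow> real"
  shows "f absolutely_integrable_on S \<and> integral S f = b \<Longrightarrow> (f has_integral b) S"
  using integrable_integral[OF absolutely_integrable_on_def[THEN iffD1, THEN conjunct1]] by blast

lemma KK_nonneg: "s > 0 \<Longrightarrow> y > 0 \<Longrightarrow> 0 \<le> KK s x (y::real)"
  by (simp add: KK_def Ek_def)
lemma KK2_nonneg: "s > 0 \<Longrightarrow> x > 0 \<Longrightarrow> y > 0 \<Longrightarrow> 0 \<le> KK2 s x (y::real)"
  by (simp add: KK2_def Ek_def)

lemma KK_cont: "s > 0 \<Longrightarrow> x > 0 \<Longrightarrow> continuous_on {0<..} (KK s (x::real))"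
  unfolding KK_def Ek_def by (intro continuous_intros) auto

lemma key_integral:
  fixes s x :: real
  assumes s: "s > 0" and x: "x > 0"
  shows "(KK s x has_integral exp (- (1 / x powr s))) {0<..}"
proof -
  define S :: "real set" where "S = {0<..}"
  define f :: "real \<Rightarrow> real" where "f = (\<lambda>u. exp (- u\<^sup>2 / 2))"
  have Sl: "S \<in> sets lebesgue" by (simp add: S_def)
  have fai: "f absolutely_integrable_on UNIV"
    using gauss_hk unfolding f_def by (intro nonnegative_absolutely_integrable_1) auto
  have fint: "integral UNIV f = sqrt (2*pi)" using gauss_hk unfolding f_def by (rule integral_unique)
  have "(\<lambda>y. \<bar>gg' s x y\<bar> * f (gg s x y)) absolutely_integrable_on S \<and>
        integral S (\<lambda>y. \<bar>gg' s x y\<bar> * f (gg s x y)) = sqrt (2*pi)"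
  proof (rule iffD2[OF has_absolute_integral_change_of_variables_1'[OF Sl, where g="gg s x" and g'="gg' s x" and f=f and b="sqrt (2*pi)"]])
    show "(gg s x has_field_derivative gg' s x y) (at y within S)" if "y \<in> S" for y
      using gg_deriv[of y x s] that x unfolding S_def by (simp add: has_field_derivative_at_within)
    show "inj_on (gg s x) S" using gg_inj[OF s x] by (simp add: S_def)
    show "f absolutely_integrable_on gg s x ` S \<and> integral (gg s x ` S) f = sqrt (2 * pi)"
      using gg_surj[OF s x] fai fint by (simp add: S_def)
  qed
  then have h1: "((\<lambda>y. \<bar>gg' s x y\<bar> * f (gg s x y)) has_integral sqrt (2*pi)) S"
    by (rule ai_has_integral)
  have "((\<lambda>y. KK s x y + KK2 s x y) has_integral sqrt(2/pi) * exp (- (1 / x powr s)) * sqrt (2*pi)) S"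
    using has_integral_mult_right[OF h1, of "sqrt(2/pi) * exp (- (1 / x powr s))"]
    by (subst has_integral_cong[where g="\<lambda>y. sqrt(2/pi) * exp (- (1 / x powr s)) * (\<bar>gg' s x y\<bar> * f (gg s x y))"])
       (auto simp: S_def f_def sum_identity[OF s x])
  moreover have "sqrt(2/pi) * exp (- (1 / x powr s)) * sqrt (2*pi) = 2 * exp (- (1 / x powr s))"
  proof -
    have "sqrt(2/pi) * sqrt (2*pi) = 2" by (simp add: real_sqrt_mult[symmetric])
    then show ?thesis by (metis mult.commute mult.left_commute)
  qed
  ultimately have hsum: "((\<lambda>y. KK s x y + KK2 s x y) has_integral 2 * exp (- (1 / x powr s))) S" by simp
  have Kai: "KK s x absolutely_integrable_on S"
  proof (rule measurable_bounded_by_integrable_imp_absolutely_integrable[OF _ Sl])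
    show "KK s x \<in> borel_measurable (lebesgue_on S)"
      using KK_cont[OF s x] Sl by (intro continuous_imp_measurable_on_sets_lebesgue) (auto simp: S_def)
    show "(\<lambda>y. KK s x y + KK2 s x y) integrable_on S" using hsum by blast
    show "norm (KK s x y) \<le> KK s x y + KK2 s x y" if "y \<in> S" for y
      using that KK_nonneg[OF s, of y x] KK2_nonneg[OF s x, of y] by (auto simp: S_def)
  qed
  define b where "b = integral S (KK s x)"
  have "(\<lambda>y. \<bar>- x / y\<^sup>2\<bar> * KK s x (x / y)) absolutely_integrable_on S \<and>
        integral S (\<lambda>y. \<bar>- x / y\<^sup>2\<bar> * KK s x (x / y)) = b"
  proof (rule iffD2[OF has_absolute_integral_change_of_variables_1'[OF Sl, where g="\<lambda>y. x / y" and g'="\<lambda>y. - x / y\<^sup>2" and f="KK s x" and b=b]])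
    show "((\<lambda>y. x / y) has_field_derivative - x / y\<^sup>2) (at y within S)" if "y \<in> S" for y
    proof -
      have "((\<lambda>y. x / y) has_real_derivative (0 * y - x * 1) / (y * y)) (at y)"
        using that by (intro DERIV_divide DERIV_const DERIV_ident) (simp add: S_def)
      then show ?thesis by (simp add: power2_eq_square has_field_derivative_at_within)
    qed
    show "inj_on (\<lambda>y. x / y) S" using x by (auto simp: S_def inj_on_def field_simps)
    have "(\<lambda>y. x / y) ` S = S"
    proof
      show "(\<lambda>y. x / y) ` S \<subseteq> S" using x by (auto simp: S_def)
      show "S \<subseteq> (\<lambda>y. x / y) ` S"
      proof
        fix z assume "z \<in> S"
        then have "x / (x / z) = z" "x / z \<in> S" using x by (auto simp: S_def)
        then show "z \<in> (\<lambda>y. x / y) ` S" by (metis image_eqI)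
      qed
    qed
    then show "KK s x absolutely_integrable_on (\<lambda>y. x / y) ` S \<and> integral ((\<lambda>y. x / y) ` S) (KK s x) = b"
      using Kai by (simp add: b_def)
  qed
  then have "((\<lambda>y. \<bar>- x / y\<^sup>2\<bar> * KK s x (x / y)) has_integral b) S"
    by (rule ai_has_integral)
  then have h2: "(KK2 s x has_integral b) S"
    by (subst has_integral_cong[where g="\<lambda>y. \<bar>- x / y\<^sup>2\<bar> * KK s x (x / y)"])
       (auto simp: S_def mirror_identity[OF s x, symmetric] simp del: abs_divide abs_minus_cancel)
  have h3: "(KK s x has_integral b) S"
    using integrable_integral[OF absolutely_integrable_on_def[THEN iffD1, THEN conjunct1, OF Kai]] by (simp add: b_def)
  have "((\<lambda>y. KK s x y + KK2 s x y) has_integral b + b) S" using has_integral_add[OF h3 h2] by simp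
  then have "b + b = 2 * exp (- (1 / x powr s))" using hsum has_integral_unique by blast
  then have "b = exp (- (1 / x powr s))" by simp
  then show ?thesis using h3 by (simp add: S_def)
qed



lemma nnFTC:
  fixes f F :: "real \<Rightarrow> real" and a b :: ereal
  assumes "a < b"
  assumes F: "\<And>x. a < ereal x \<Longrightarrow> ereal x < b \<Longrightarrow> DERIV F x :> f x"
  assumes f: "\<And>x. a < ereal x \<Longrightarrow> ereal x < b \<Longrightarrow> isCont f x"
  assumes f_nonneg: "\<And>x. a < ereal x \<Longrightarrow> ereal x < b \<Longrightarrow> 0 \<le> f x"
  assumes A: "((F \<circ> real_of_ereal) \<longlongrightarrow> A) (at_right a)"
  assumes B: "((F \<circ> real_of_ereal) \<longlongrightarrow> B) (at_left b)"
  shows "(\<integral>\<^sup>+x. ennreal (f x) * indicator (einterval a b) x \<partial>lborel) = ennreal (B - A)"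
proof -
  have nn: "AE x in lborel. a < ereal x \<longrightarrow> ereal x < b \<longrightarrow> 0 \<le> f x" using f_nonneg by auto
  note FTC = interval_integral_FTC_nonneg[OF assms(1) F f nn A B]
  have int: "integrable lborel (\<lambda>x. indicator (einterval a b) x *\<^sub>R f x)"
    using FTC(1) unfolding set_integrable_def .
  have "(\<integral>\<^sup>+x. ennreal (indicator (einterval a b) x *\<^sub>R f x) \<partial>lborel) =
        ennreal (LINT x|lborel. indicator (einterval a b) x *\<^sub>R f x)"
    by (rule nn_integral_eq_integral[OF int]) (auto simp: einterval_def f_nonneg split: split_indicator)
  also have "(LINT x|lborel. indicator (einterval a b) x *\<^sub>R f x) = B - A"
    using FTC(2) order.strict_implies_order[OF \<open>a < b\<close>] unfolding interval_lebesgue_integral_def set_lebesgue_integral_def by simp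
  finally show ?thesis
    by (subst (asm) nn_integral_cong[where v="\<lambda>x. ennreal (f x) * indicator (einterval a b) x"])
       (auto split: split_indicator)
qed

lemma gumbel_limits:
  "((\<lambda>t::real. exp (- exp (- t))) \<longlongrightarrow> 0) at_bot"
  "((\<lambda>t::real. exp (- exp (- t))) \<longlongrightarrow> 1) at_top"
  by real_asymp+

lemma gumbel_deriv: "((\<lambda>t. exp (- exp (- t))) has_real_derivative gumbel_density t) (at t)"
  unfolding gumbel_density_def by (auto intro!: derivative_eq_intros)

lemma gumbel_cont: "isCont gumbel_density t"
  unfolding gumbel_density_def by (intro continuous_intros)

lemma gumbel_nonneg: "0 \<le> gumbel_density t"
  unfolding gumbel_density_def by simp

lemma gumbel_total: "(\<integral>\<^sup>+x. ennreal (gumbel_density x) * indicator (einterval (-\<infinity>) \<infinity>) x \<partial>lborel) = 1"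
proof -
  have "(\<integral>\<^sup>+x. ennreal (gumbel_density x) * indicator (einterval (-\<infinity>) \<infinity>) x \<partial>lborel) = ennreal (1 - 0)"
    by (rule nnFTC[where F="\<lambda>t. exp (- exp (- t))"])
       (auto simp: gumbel_deriv gumbel_cont ereal_tendsto_simps gumbel_limits gumbel_nonneg)
  then show ?thesis by simp
qed

lemma gumbel_meas[measurable]: "gumbel_density \<in> borel_measurable borel"
  unfolding gumbel_density_def by measurable

lemma gumbel_emeasure_le: "emeasure gumbel_measure {..T} = ennreal (exp (- exp (- T)))"
proof -
  have "emeasure gumbel_measure {..T} = (\<integral>\<^sup>+x. ennreal (gumbel_density x) * indicator {..T} x \<partial>lborel)"
    unfolding gumbel_measure_def by (subst emeasure_density) auto
  also have "\<dots> = (\<integral>\<^sup>+x. ennreal (gumbel_density x) * indicator (einterval (-\<infinity>) (ereal T)) x \<partial>lborel)"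
    by (intro nn_integral_cong_AE, use AE_lborel_singleton[of T] in eventually_elim)
       (auto simp: einterval_def split: split_indicator)
  also have "\<dots> = ennreal (exp (- exp (- T)) - 0)"
    by (rule nnFTC[where F="\<lambda>t. exp (- exp (- t))"])
       (auto simp: gumbel_deriv gumbel_cont ereal_tendsto_simps gumbel_limits gumbel_nonneg
             intro!: tendsto_eq_intros)
  finally show ?thesis by simp
qed

lemma gumbel_prob: "prob_space gumbel_measure"
proof (rule prob_spaceI)
  have "emeasure gumbel_measure UNIV = (\<integral>\<^sup>+x. ennreal (gumbel_density x) * indicator UNIV x \<partial>lborel)"
    unfolding gumbel_measure_def by (subst emeasure_density) auto
  also have "\<dots> = 1" using gumbel_total by simp
  finally show "emeasure gumbel_measure (space gumbel_measure) = 1"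
    by (simp add: gumbel_measure_def)
qed

lemma frechet_real_distribution: "real_distribution (frechet_measure s)"
proof -
  have "(\<lambda>t. exp (t / s)) \<in> borel_measurable gumbel_measure"
    by (simp add: gumbel_measure_def)
  then show ?thesis
    unfolding real_distribution_def real_distribution_axioms_def frechet_measure_def
    using prob_space.prob_space_distr[OF gumbel_prob] by auto
qed

lemma frechet_emeasure_le:
  fixes s x :: real assumes s: "s > 0"
  shows "emeasure (frechet_measure s) {..x} = (if x > 0 then ennreal (exp (- (1 / x powr s))) else 0)"
proof -
  have sp: "space gumbel_measure = UNIV" by (simp add: gumbel_measure_def)
  have "emeasure (frechet_measure s) {..x} = emeasure gumbel_measure ((\<lambda>t. exp (t / s)) -` {..x})"
    unfolding frechet_measure_def by (subst emeasure_distr) (auto simp: sp gumbel_measure_def)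
  also have "\<dots> = (if x > 0 then ennreal (exp (- (1 / x powr s))) else 0)"
  proof (cases "x > 0")
    case True
    have "(\<lambda>t. exp (t / s)) -` {..x} = {..s * ln x}"
      using True s by (auto simp: ln_ge_iff[symmetric] pos_divide_le_eq mult.commute)
    moreover have "exp (- (s * ln x)) = 1 / x powr s" using True by (simp add: powr_def exp_minus inverse_eq_divide)
    ultimately show ?thesis using True by (simp add: gumbel_emeasure_le)
  next
    case False
    then have "(\<lambda>t. exp (t / s)) -` {..x} = {}" by (auto simp: not_less) (smt (verit) exp_gt_zero)
    then show ?thesis using False by simp
  qed
  finally show ?thesis .
qed

lemma pa_F_lim0:
  fixes r :: real assumes r: "r > 0"
  shows "((\<lambda>y. exp (- 1 / (2 * y powr r))) \<longlongrightarrow> 0) (at_right 0)"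
  using r by real_asymp

lemma pa_deriv:
  fixes \<sigma> y :: real assumes y: "y > 0"
  shows "((\<lambda>y. exp (- 1 / (2 * y powr (2 * \<sigma>\<^sup>2)))) has_real_derivative
     \<sigma>\<^sup>2 * y powr (-1 - 2 * \<sigma>\<^sup>2) * exp (- 1 / (2 * y powr (2 * \<sigma>\<^sup>2)))) (at y)"
proof -
  define r where "r = 2 * \<sigma>\<^sup>2"
  define Q where "Q = y powr r"
  have Q: "Q > 0" using y by (simp add: Q_def)
  have "((\<lambda>y. exp (- 1 / (2 * y powr r))) has_real_derivative
     exp (- 1 / (2 * y powr r)) * ((2 * (r * y powr (r - 1))) / (2 * y powr r)\<^sup>2)) (at y)"
    using y by (auto intro!: derivative_eq_intros simp: power2_eq_square)
  moreover have "y powr (r - 1) = Q / y" using y by (simp add: Q_def powr_diff)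
  moreover have "y powr (-1 - r) = 1 / (y * Q)"
  proof -
    have "y powr (-1-r) = inverse (y powr (1+r))" by (simp add: powr_minus[symmetric])
    also have "\<dots> = 1/(y * Q)" using y by (simp add: powr_add divide_inverse Q_def)
    finally show ?thesis .
  qed
  moreover have "exp (- 1 / (2 * Q)) * ((2 * (r * (Q / y))) / (2 * Q)\<^sup>2) = \<sigma>\<^sup>2 * (1 / (y * Q)) * exp (- 1 / (2 * Q))"
    using y Q by (simp add: r_def field_simps power2_eq_square)
  ultimately show ?thesis unfolding r_def[symmetric] Q_def[symmetric]
    by (metis Q_def)
qed

lemma pa_cdf:
  fixes \<sigma> t :: real assumes \<sigma>: "\<sigma> > 0" and t: "t > 0"
  shows "(\<integral>\<^sup>+p. ennreal (p_a \<sigma> p) * indicator {..t} p \<partial>lborel) = ennreal (exp (- 1 / (2 * t powr (2 * \<sigma>\<^sup>2))))"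
proof -
  define f where "f = (\<lambda>y::real. \<sigma>\<^sup>2 * y powr (-1 - 2 * \<sigma>\<^sup>2) * exp (- 1 / (2 * y powr (2 * \<sigma>\<^sup>2))))"
  define F where "F = (\<lambda>y::real. exp (- 1 / (2 * y powr (2 * \<sigma>\<^sup>2))))"
  have "(\<integral>\<^sup>+p. ennreal (p_a \<sigma> p) * indicator {..t} p \<partial>lborel) =
        (\<integral>\<^sup>+p. ennreal (f p) * indicator (einterval 0 (ereal t)) p \<partial>lborel)"
    by (intro nn_integral_cong_AE, use AE_lborel_singleton[of t] in eventually_elim)
       (auto simp: einterval_def p_a_def f_def split: split_indicator)
  also have "\<dots> = ennreal (F t - 0)"
  proof (rule nnFTC[where F=F])
    show "DERIV F x :> f x" if "0 < ereal x" "ereal x < ereal t" for x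
      using that pa_deriv[of x \<sigma>] by (simp add: F_def f_def)
    show "isCont f x" if "0 < ereal x" "ereal x < ereal t" for x
      using that unfolding f_def by (intro continuous_intros) auto
    show "0 \<le> f x" if "0 < ereal x" "ereal x < ereal t" for x
      using that unfolding f_def by simp
    show "((F \<circ> real_of_ereal) \<longlongrightarrow> 0) (at_right 0)"
      using pa_F_lim0[of "2 * \<sigma>\<^sup>2"] \<sigma> unfolding zero_ereal_def ereal_tendsto_simps F_def by simp
    show "((F \<circ> real_of_ereal) \<longlongrightarrow> F t) (at_left (ereal t))"
      unfolding ereal_tendsto_simps F_def using t by (auto intro!: tendsto_eq_intros)
  qed (use t in auto)
  finally show ?thesis by (simp add: F_def)
qed

lemma pb_identity:
  fixes \<sigma> x y :: real assumes "\<sigma> > 0" "x > 0" "y > 0"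
  shows "p_b \<sigma> y * exp (- 1 / (2 * (x / y) powr (2 * \<sigma>\<^sup>2))) = KK (\<sigma>\<^sup>2) x y"
proof -
  define s where "s = \<sigma>\<^sup>2"
  define P where "P = y powr s"
  define X where "X = x powr s"
  have P: "P > 0" and X: "X > 0" using assms by (auto simp: P_def X_def)
  have e1: "y powr (2 * s) = P\<^sup>2" using powr2[of y s] by (simp add: P_def power2_eq_square)
  have e2: "(x / y) powr (2 * s) = X\<^sup>2 / P\<^sup>2" using powr2[of "x/y" s] assms
    by (simp add: P_def X_def power2_eq_square powr_divide)
  have e3: "y powr (-1 - s) = 1 / (y * P)" using powr_facts(3)[of y x s] assms by (simp add: P_def)
  have ex: "exp (- 1 / (2 * P\<^sup>2)) * exp (- 1 / (2 * (X\<^sup>2 / P\<^sup>2))) = exp (- (1 / P\<^sup>2 + P\<^sup>2 / X\<^sup>2) / 2)"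
    unfolding exp_add[symmetric] using P X by (simp add: field_simps)
  show ?thesis
    unfolding p_b_def KK_def Ek_def s_def[symmetric] P_def[symmetric] X_def[symmetric]
    using assms e1 e2 e3 ex by (simp add: mult_ac)
qed

theorem proposition1:
  fixes M :: "'m measure" and a b :: "'m \<Rightarrow> real" and \<sigma> :: real
  assumes "prob_space M"
    and "\<sigma> > 0"
    and "distributed M lborel a (\<lambda>y. ennreal (p_a \<sigma> y))"
    and "distributed M lborel b (\<lambda>y. ennreal (p_b \<sigma> y))"
    and "prob_space.indep_var M borel a borel b"
  shows "distr M borel (\<lambda>\<omega>. a \<omega> * b \<omega>) = frechet_measure (\<sigma>\<^sup>2)"
proof -
  interpret prob_space M by fact
  have \<sigma>: "\<sigma> > 0" by fact
  have s: "\<sigma>\<^sup>2 > 0" using \<sigma> by simp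
  have ma[measurable]: "a \<in> borel_measurable M" using distributed_measurable[OF assms(3)] by simp
  have mb[measurable]: "b \<in> borel_measurable M" using distributed_measurable[OF assms(4)] by simp
  have pbm[measurable]: "(\<lambda>y. ennreal (p_b \<sigma> y)) \<in> borel_measurable lborel"
    using distributed_borel_measurable[OF assms(4)] .
  have pam[measurable]: "(\<lambda>y. ennreal (p_a \<sigma> y)) \<in> borel_measurable lborel"
    using distributed_borel_measurable[OF assms(3)] .
  define Pa where "Pa = distr M borel a"
  define Pb where "Pb = distr M borel b"
  have Pa_dens: "Pa = density lborel (\<lambda>y. ennreal (p_a \<sigma> y))"
  proof -
    have "distr M borel a = distr M lborel a" by (rule distr_cong) auto
    then show ?thesis using distributed_distr_eq_density[OF assms(3)] by (simp add: Pa_def)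
  qed
  have Pb_dens: "Pb = density lborel (\<lambda>y. ennreal (p_b \<sigma> y))"
  proof -
    have "distr M borel b = distr M lborel b" by (rule distr_cong) auto
    then show ?thesis using distributed_distr_eq_density[OF assms(4)] by (simp add: Pb_def)
  qed
  have PA: "prob_space Pa" unfolding Pa_def by (rule prob_space_distr) simp
  have PB: "prob_space Pb" unfolding Pb_def by (rule prob_space_distr) simp
  interpret PP: pair_prob_space Pa Pb
    by (simp add: pair_prob_space_def pair_sigma_finite_def prob_space_imp_sigma_finite PA PB)
  have sPa[simp]: "sets Pa = sets borel" and sPb[simp]: "sets Pb = sets borel" by (simp_all add: Pa_def Pb_def)
  have spPa[simp]: "space Pa = UNIV" and spPb[simp]: "space Pb = UNIV" by (simp_all add: Pa_def Pb_def)
  have indep: "Pa \<Otimes>\<^sub>M Pb = distr M (borel \<Otimes>\<^sub>M borel) (\<lambda>\<omega>. (a \<omega>, b \<omega>))"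
    using indep_var_distribution_eq[THEN iffD1, OF assms(5)] by (simp add: Pa_def Pb_def)
  have D: "distr M borel (\<lambda>\<omega>. a \<omega> * b \<omega>) = distr (Pa \<Otimes>\<^sub>M Pb) borel (\<lambda>(p, q). p * q)"
    unfolding indep by (subst distr_distr) (auto simp: comp_def)
  have key: "emeasure (distr M borel (\<lambda>\<omega>. a \<omega> * b \<omega>)) {..x} = emeasure (frechet_measure (\<sigma>\<^sup>2)) {..x}" for x :: real
  proof -
    define A where "A = {z \<in> space (borel \<Otimes>\<^sub>M borel). fst z * snd z \<le> (x::real)}"
    have A: "A \<in> sets (Pa \<Otimes>\<^sub>M Pb)"
    proof -
      have "A \<in> sets (borel \<Otimes>\<^sub>M borel)" unfolding A_def by measurable
      moreover have "sets (Pa \<Otimes>\<^sub>M Pb) = sets (borel \<Otimes>\<^sub>M (borel :: real measure))"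
        by (rule sets_pair_measure_cong) simp_all
      ultimately show ?thesis by simp
    qed
    have sPP: "sets (Pa \<Otimes>\<^sub>M Pb) = sets (borel \<Otimes>\<^sub>M (borel :: real measure))"
      by (rule sets_pair_measure_cong) simp_all
    have "(\<lambda>(p::real, q). p * q) \<in> borel_measurable (borel \<Otimes>\<^sub>M borel)" by measurable
    then have mm: "(\<lambda>(p::real, q). p * q) \<in> borel_measurable (Pa \<Otimes>\<^sub>M Pb)"
      unfolding measurable_cong_sets[OF sPP refl] .
    have "emeasure (distr M borel (\<lambda>\<omega>. a \<omega> * b \<omega>)) {..x} = emeasure (Pa \<Otimes>\<^sub>M Pb) A"
      unfolding D by (subst emeasure_distr[OF mm]) (auto simp: A_def space_pair_measure intro!: arg_cong[where f="emeasure _"])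
    also have "\<dots> = (\<integral>\<^sup>+q. emeasure Pa ((\<lambda>p. (p, q)) -` A) \<partial>Pb)"
      by (rule PP.emeasure_pair_measure_alt2[OF A])
    also have "\<dots> = (\<integral>\<^sup>+q. ennreal (p_b \<sigma> q) * emeasure Pa ((\<lambda>p. (p, q)) -` A) \<partial>lborel)"
    proof -
      have sPbl: "sets lborel = sets Pb" by simp
      have "(\<lambda>q. emeasure Pa ((\<lambda>p. (p, q)) -` A)) \<in> borel_measurable Pb"
        by (rule PP.measurable_emeasure_Pair2[OF A])
      then have m: "(\<lambda>q. emeasure Pa ((\<lambda>p. (p, q)) -` A)) \<in> borel_measurable lborel"
        unfolding measurable_cong_sets[OF sPbl refl] .
      show ?thesis unfolding Pb_dens by (rule nn_integral_density[OF pbm m])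
    qed
    also have "\<dots> = (\<integral>\<^sup>+q. (if x > 0 then ennreal (KK (\<sigma>\<^sup>2) x q) * indicator {0<..} q else 0) \<partial>lborel)"
    proof (rule nn_integral_cong)
      fix q :: real
      show "ennreal (p_b \<sigma> q) * emeasure Pa ((\<lambda>p. (p, q)) -` A) =
            (if x > 0 then ennreal (KK (\<sigma>\<^sup>2) x q) * indicator {0<..} q else 0)"
      proof (cases "q > 0")
        case False
        then show ?thesis by (auto simp: p_b_def)
      next
        case q: True
        have sl: "(\<lambda>p. (p, q)) -` A = {..x / q}"
          using q by (auto simp: A_def space_pair_measure pos_le_divide_eq)
        have em: "emeasure Pa {..x / q} = (\<integral>\<^sup>+p. ennreal (p_a \<sigma> p) * indicator {..x/q} p \<partial>lborel)"
          unfolding Pa_dens by (subst emeasure_density) auto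
        show ?thesis
        proof (cases "x > 0")
          case x: True
          have "emeasure Pa {..x / q} = ennreal (exp (- 1 / (2 * (x / q) powr (2 * \<sigma>\<^sup>2))))"
            unfolding em using pa_cdf[OF \<sigma>, of "x/q"] x q by simp
          then show ?thesis using x q pb_identity[OF \<sigma> x q] 
            by (simp add: sl ennreal_mult'[symmetric] p_b_def)
        next
          case x: False
          have "emeasure Pa {..x / q} = 0"
            unfolding em
          proof (rule nn_integral_0_iff_AE[THEN iffD2], simp, rule AE_I2)
            fix p show "ennreal (p_a \<sigma> p) * indicator {..x / q} p = 0"
              using x q by (auto simp: p_a_def split: split_indicator dest: order.trans[OF _ divide_nonpos_pos[of x q]])
          qed
          then show ?thesis using x by (simp add: sl)
        qed
      qed
    qed
    also have "\<dots> = emeasure (frechet_measure (\<sigma>\<^sup>2)) {..x}"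
    proof (cases "x > 0")
      case x: True
      have "(\<integral>\<^sup>+q. ennreal (KK (\<sigma>\<^sup>2) x q) * indicator {0<..} q \<partial>lborel) = ennreal (exp (- (1 / x powr \<sigma>\<^sup>2)))"
        by (rule nn_integral_has_integral_lebesgue'[OF _ key_integral[OF s x]]) (simp add: KK_nonneg[OF s])
      then show ?thesis using x frechet_emeasure_le[OF s, of x] by simp
    next
      case False
      then show ?thesis using frechet_emeasure_le[OF s, of x] by simp
    qed
    finally show ?thesis .
  qed
  show ?thesis
  proof (rule cdf_unique)
    show "real_distribution (distr M borel (\<lambda>\<omega>. a \<omega> * b \<omega>))"
      unfolding real_distribution_def real_distribution_axioms_def
      by (auto intro!: prob_space_distr)
    show "real_distribution (frechet_measure (\<sigma>\<^sup>2))" by (rule frechet_real_distribution)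
    show "cdf (distr M borel (\<lambda>\<omega>. a \<omega> * b \<omega>)) = cdf (frechet_measure (\<sigma>\<^sup>2))"
      by (rule ext) (simp add: cdf_def2 measure_def key)
  qed
qed


end
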